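(* Let $(b,c)$ be a locally finite, connected graph over a countable set $X$ on which $\mathbb{Z}^d$ acts freely and cocompactly with fundamental domain $V$ (so every $x\in X$ is uniquely $x=zv$, $z\in\mathbb{Z}^d$, $v\in V$), such that $H_{b,c}$ is $\mathbb{Z}^d$-invariant; fix $x_0\in X$. For $\alpha\in\mathbb{R}^d$ let $Q_\alpha$ be the $V\times V$ matrix with $(Q_\alpha)_{v,w}=\sum_{z\in\mathbb{Z}^d}b(v,zw)e^{\langle\alpha,z\rangle}$ for $v\neq w$ and $(Q_\alpha)_{v,v}=\sum_{z\in\mathbb{Z}^d}b(v,zv)e^{\langle\alpha,z\rangle}+\max_{w\in V}\deg(w)-\deg(v)$; it is nonnegative and irreducible, with Perron–Frobenius eigenvalue $\theta(\alpha)$ and positive Perron–Frobenius eigenvector $\varphi_\alpha$. Then the map $\rho:\mathcal{M}_\mathbb{R}\to\mathbb{R}^d$ is bijective, with inverse $\rho^{-1}(\alpha)(zv)=e^{\langle\alpha,z\rangle}\varphi_\alpha(v)$ ($z\in\mathbb{Z}^d$, $v\in V$), where $\varphi_\alpha$ is normalised so that this function equals $1$ at $x_0$. Moreover, $\rho^{-1}(\alpha)\in\mathcal{M}_\lambda$ with $\lambda=\max_{v\in V}\deg(v)-\theta(\alpha)$.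
   Context: A graph over $X$ is $(b,c)$ with $b:X\times X\to[0,\infty)$, $c:X\to\mathbb{R}$, $\sum_yb(x,y)<\infty$ ($b$ need not be symmetric); locally finite and connected as usual ($x\sim y$ iff $b(x,y)>0$). $\deg(x)=\sum_yb(x,y)+c(x)$. $H_{b,c}f(x)=\sum_yb(x,y)(f(x)-f(y))+c(x)f(x)$ on $\mathrm{Dom}(H)=\{f:\sum_yb(x,y)|f(y)|<\infty\ \forall x\}$; $f$ is $\lambda$-harmonic if $(H-\lambda)f=0$. $T_gf(x)=f(g^{-1}x)$; $H$ is $\mathbb{Z}^d$-invariant if $T_g$ preserves $\mathrm{Dom}(H)$ and $HT_g=T_gH$. $f$ is multiplicative with character $\gamma_f$ if $\gamma_f:\mathbb{Z}^d\to(0,\infty)$ is a homomorphism with $f(zx)=\gamma_f(z)f(x)$. $\mathcal{K}_\lambda$ is the pointwise closure of $\{f\ge0,\ f\not\equiv0,\ \lambda\text{-harmonic},\ f(x_0)=1\}$, $\mathcal{M}_\lambda$ its multiplicative elements, $\mathcal{M}_\mathbb{R}=\bigcup_\lambda\mathcal{M}_\lambda$. $\rho(f)$ is the vector $\alpha\in\mathbb{R}^d$ with $\log\gamma_f(z)=\langle\alpha,z\rangle$ for all $z\in\mathbb{Z}^d$. *)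

theory Defs
  imports "HOL-Analysis.Analysis"
begin

definition zr :: "int ^ 'd \<Rightarrow> real ^ 'd" where
  "zr z = (\<chi> i. real_of_int (z $ i))"

definition is_action :: "(int ^ 'd \<Rightarrow> 'x \<Rightarrow> 'x) \<Rightarrow> bool" where
  "is_action act \<longleftrightarrow> (\<forall>x. act 0 x = x) \<and> (\<forall>z w x. act (z + w) x = act z (act w x))"

definition free_action :: "(int ^ 'd \<Rightarrow> 'x \<Rightarrow> 'x) \<Rightarrow> bool" where
  "free_action act \<longleftrightarrow> (\<forall>z x. act z x = x \<longrightarrow> z = 0)"

definition fundamental_domain :: "(int ^ 'd \<Rightarrow> 'x \<Rightarrow> 'x) \<Rightarrow> 'x set \<Rightarrow> bool" where
  "fundamental_domain act V \<longleftrightarrow>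
     (\<forall>x. \<exists>!p. snd p \<in> V \<and> x = act (fst p) (snd p))"

definition coord :: "(int ^ 'd \<Rightarrow> 'x \<Rightarrow> 'x) \<Rightarrow> 'x set \<Rightarrow> 'x \<Rightarrow> (int ^ 'd) \<times> 'x" where
  "coord act V x = (THE p. snd p \<in> V \<and> x = act (fst p) (snd p))"

definition is_graph :: "('x \<Rightarrow> 'x \<Rightarrow> real) \<Rightarrow> bool" where
  "is_graph b \<longleftrightarrow> (\<forall>x y. b x y \<ge> 0) \<and> (\<forall>x. (b x) summable_on UNIV)"

definition locally_finite :: "('x \<Rightarrow> 'x \<Rightarrow> real) \<Rightarrow> bool" where
  "locally_finite b \<longleftrightarrow> (\<forall>x. finite {y. b x y > 0})"

definition connected_graph :: "('x \<Rightarrow> 'x \<Rightarrow> real) \<Rightarrow> bool" where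
  "connected_graph b \<longleftrightarrow> (\<forall>x y. (\<lambda>u w. b u w > 0)\<^sup>*\<^sup>* x y)"

definition deg :: "('x \<Rightarrow> 'x \<Rightarrow> real) \<Rightarrow> ('x \<Rightarrow> real) \<Rightarrow> 'x \<Rightarrow> real" where
  "deg b c x = (\<Sum>\<^sub>\<infinity>y. b x y) + c x"

definition DomH :: "('x \<Rightarrow> 'x \<Rightarrow> real) \<Rightarrow> ('x \<Rightarrow> real) set" where
  "DomH b = {f. \<forall>x. (\<lambda>y. b x y * \<bar>f y\<bar>) summable_on UNIV}"

definition Hop :: "('x \<Rightarrow> 'x \<Rightarrow> real) \<Rightarrow> ('x \<Rightarrow> real) \<Rightarrow> ('x \<Rightarrow> real) \<Rightarrow> 'x \<Rightarrow> real" where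
  "Hop b c f x = (\<Sum>\<^sub>\<infinity>y. b x y * (f x - f y)) + c x * f x"

definition Tg :: "(int ^ 'd \<Rightarrow> 'x \<Rightarrow> 'x) \<Rightarrow> int ^ 'd \<Rightarrow> ('x \<Rightarrow> real) \<Rightarrow> 'x \<Rightarrow> real" where
  "Tg act g f x = f (act (- g) x)"

definition H_invariant :: "('x \<Rightarrow> 'x \<Rightarrow> real) \<Rightarrow> ('x \<Rightarrow> real) \<Rightarrow> (int ^ 'd \<Rightarrow> 'x \<Rightarrow> 'x) \<Rightarrow> bool" where
  "H_invariant b c act \<longleftrightarrow>
     (\<forall>g. \<forall>f \<in> DomH b. Tg act g f \<in> DomH b \<and> Hop b c (Tg act g f) = Tg act g (Hop b c f))"

definition harmonic :: "('x \<Rightarrow> 'x \<Rightarrow> real) \<Rightarrow> ('x \<Rightarrow> real) \<Rightarrow> real \<Rightarrow> ('x \<Rightarrow> real) \<Rightarrow> bool" where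
  "harmonic b c lam f \<longleftrightarrow> f \<in> DomH b \<and> (\<forall>x. Hop b c f x - lam * f x = 0)"

text \<open>K_lambda: closure in the topology of pointwise convergence (product topology).\<close>
definition Kset :: "('x \<Rightarrow> 'x \<Rightarrow> real) \<Rightarrow> ('x \<Rightarrow> real) \<Rightarrow> 'x \<Rightarrow> real \<Rightarrow> ('x \<Rightarrow> real) set" where
  "Kset b c x0 lam = closure {f. (\<forall>x. f x \<ge> 0) \<and> f \<noteq> (\<lambda>_. 0) \<and> harmonic b c lam f \<and> f x0 = 1}"

definition is_character :: "(int ^ 'd \<Rightarrow> 'x \<Rightarrow> 'x) \<Rightarrow> ('x \<Rightarrow> real) \<Rightarrow> (int ^ 'd \<Rightarrow> real) \<Rightarrow> bool" where
  "is_character act f \<gamma> \<longleftrightarrow> (\<forall>z. \<gamma> z > 0) \<and> (\<forall>z w. \<gamma> (z + w) = \<gamma> z * \<gamma> w)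
      \<and> (\<forall>z x. f (act z x) = \<gamma> z * f x)"

definition multiplicative :: "(int ^ 'd \<Rightarrow> 'x \<Rightarrow> 'x) \<Rightarrow> ('x \<Rightarrow> real) \<Rightarrow> bool" where
  "multiplicative act f \<longleftrightarrow> (\<exists>\<gamma>. is_character act f \<gamma>)"

definition character :: "(int ^ 'd \<Rightarrow> 'x \<Rightarrow> 'x) \<Rightarrow> ('x \<Rightarrow> real) \<Rightarrow> int ^ 'd \<Rightarrow> real" where
  "character act f = (THE \<gamma>. is_character act f \<gamma>)"

definition Mset :: "('x \<Rightarrow> 'x \<Rightarrow> real) \<Rightarrow> ('x \<Rightarrow> real) \<Rightarrow> (int ^ 'd \<Rightarrow> 'x \<Rightarrow> 'x) \<Rightarrow> 'x \<Rightarrow> real \<Rightarrow> ('x \<Rightarrow> real) set" where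
  "Mset b c act x0 lam = {f \<in> Kset b c x0 lam. multiplicative act f}"

definition MR :: "('x \<Rightarrow> 'x \<Rightarrow> real) \<Rightarrow> ('x \<Rightarrow> real) \<Rightarrow> (int ^ 'd \<Rightarrow> 'x \<Rightarrow> 'x) \<Rightarrow> 'x \<Rightarrow> ('x \<Rightarrow> real) set" where
  "MR b c act x0 = (\<Union>lam. Mset b c act x0 lam)"

definition rho :: "(int ^ 'd \<Rightarrow> 'x \<Rightarrow> 'x) \<Rightarrow> ('x \<Rightarrow> real) \<Rightarrow> real ^ 'd" where
  "rho act f = (THE \<alpha>. \<forall>z. ln (character act f z) = \<alpha> \<bullet> zr z)"

definition Qmat :: "('x \<Rightarrow> 'x \<Rightarrow> real) \<Rightarrow> ('x \<Rightarrow> real) \<Rightarrow> (int ^ 'd \<Rightarrow> 'x \<Rightarrow> 'x) \<Rightarrow> 'x set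
                     \<Rightarrow> real ^ 'd \<Rightarrow> 'x \<Rightarrow> 'x \<Rightarrow> real" where
  "Qmat b c act V \<alpha> v w =
     (if v = w then (\<Sum>\<^sub>\<infinity>z. b v (act z v) * exp (\<alpha> \<bullet> zr z)) + Max (deg b c ` V) - deg b c v
      else (\<Sum>\<^sub>\<infinity>z. b v (act z w) * exp (\<alpha> \<bullet> zr z)))"

definition eigenvalues_on :: "'x set \<Rightarrow> ('x \<Rightarrow> 'x \<Rightarrow> real) \<Rightarrow> complex set" where
  "eigenvalues_on V Q = {\<mu>. \<exists>u :: 'x \<Rightarrow> complex. (\<exists>v\<in>V. u v \<noteq> 0) \<and>
        (\<forall>v\<in>V. (\<Sum>w\<in>V. complex_of_real (Q v w) * u w) = \<mu> * u v)}"

text \<open>The Perron-Frobenius eigenvalue of a nonnegative irreducible matrix is its spectral radius.\<close>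
definition PF_eigenvalue :: "'x set \<Rightarrow> ('x \<Rightarrow> 'x \<Rightarrow> real) \<Rightarrow> real" where
  "PF_eigenvalue V Q = Max (cmod ` eigenvalues_on V Q)"

definition PF_eigenvector :: "'x set \<Rightarrow> ('x \<Rightarrow> 'x \<Rightarrow> real) \<Rightarrow> ('x \<Rightarrow> real) \<Rightarrow> bool" where
  "PF_eigenvector V Q \<phi> \<longleftrightarrow> (\<forall>v\<in>V. \<phi> v > 0) \<and>
      (\<forall>v\<in>V. (\<Sum>w\<in>V. Q v w * \<phi> w) = PF_eigenvalue V Q * \<phi> v)"

definition mult_fun :: "(int ^ 'd \<Rightarrow> 'x \<Rightarrow> 'x) \<Rightarrow> 'x set \<Rightarrow> real ^ 'd \<Rightarrow> ('x \<Rightarrow> real) \<Rightarrow> 'x \<Rightarrow> real" where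
  "mult_fun act V \<alpha> \<phi> x = (case coord act V x of (z, v) \<Rightarrow> exp (\<alpha> \<bullet> zr z) * \<phi> v)"

end

theory Submission
  imports Defs "Jordan_Normal_Form.Spectral_Radius"
begin

lemma fin_supp_infsum:
  fixes f :: "'a \<Rightarrow> real"
  assumes "finite F" "\<And>x. x \<notin> F \<Longrightarrow> f x = 0"
  shows "f summable_on UNIV" "infsum f UNIV = sum f F"
proof -
  have "f summable_on F" using assms(1) by simp
  then show "f summable_on UNIV"
    by (rule summable_on_cong_neutral[THEN iffD1, rotated -1]) (use assms in auto)
  have "infsum f UNIV = infsum f F"
    by (rule infsum_cong_neutral) (use assms in auto)
  then show "infsum f UNIV = sum f F" using assms(1) by simp
qed

lemma zr_add: "zr (z + w) = zr z + zr w"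
  by (simp add: zr_def Finite_Cartesian_Product.vec_eq_iff)
lemma zr_0: "zr 0 = 0"
  by (simp add: zr_def Finite_Cartesian_Product.vec_eq_iff)
lemma zr_neg: "zr (- z) = - zr z"
  by (simp add: zr_def Finite_Cartesian_Product.vec_eq_iff)

lemma exp_zr_add: "exp (inner \<alpha> (zr (z + w))) = exp (inner \<alpha> (zr z)) * exp (inner \<alpha> (zr w))"
  by (simp add: zr_add inner_add_right exp_add)

lemma zr_axis: "zr (axis i 1) = axis i 1"
  by (simp add: zr_def Finite_Cartesian_Product.vec_eq_iff axis_def)

lemma hom_exp:
  fixes \<gamma> :: "int ^ 'd::finite \<Rightarrow> real"
  assumes pos: "\<And>z. \<gamma> z > 0" and hom: "\<And>z w. \<gamma> (z + w) = \<gamma> z * \<gamma> w"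
  shows "\<exists>\<alpha>. \<forall>z. \<gamma> z = exp (inner \<alpha> (zr z))"
proof -
  define L where "L z = ln (\<gamma> z)" for z
  have Ladd: "L (z + w) = L z + L w" for z w
    using pos[of z] pos[of w] hom[of z w] by (simp add: L_def ln_mult)
  have L0: "L 0 = 0" using Ladd[of 0 0] by simp
  have Lneg: "L (- z) = - L z" for z using Ladd[of z "-z"] L0 by simp
  have Lsum: "L (sum u S) = (\<Sum>i\<in>S. L (u i))" if "finite S" for u :: "'i \<Rightarrow> int^'d" and S
    using that by (induction S rule: finite_induct) (simp_all add: L0 Ladd)
  have axis_add: "axis i (a + b) = axis i a + (axis i b :: int^'d)" for i a b
    by (simp add: Finite_Cartesian_Product.vec_eq_iff axis_def)
  have Lax: "L (axis i k) = real_of_int k * L (axis i 1)" for i k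
  proof (induction k rule: int_induct[where k=0])
    case base
    have ax0: "axis i (0::int) = 0" by (simp add: axis_def Finite_Cartesian_Product.vec_eq_iff)
    show ?case by (simp only: ax0 L0)
  next
    case (step1 k) then show ?case by (simp add: axis_add Ladd algebra_simps)
  next
    case (step2 k)
    have "axis i k = axis i (k - 1) + axis i (1::int)" by (simp add: axis_add[symmetric])
    then have "L (axis i k) = L (axis i (k - 1)) + L (axis i 1)" by (simp add: Ladd)
    with step2 show ?case by (simp add: algebra_simps)
  qed
  define \<alpha> :: "real^'d" where "\<alpha> = (\<chi> i. L (axis i 1))"
  have "\<gamma> z = exp (inner \<alpha> (zr z))" for z
  proof -
    have z: "z = (\<Sum>i\<in>UNIV. axis i (z $ i))"
      by (simp add: Finite_Cartesian_Product.vec_eq_iff axis_def)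
    have "L z = (\<Sum>i\<in>UNIV. L (axis i (z $ i)))"
      by (subst z) (simp add: Lsum)
    also have "\<dots> = inner \<alpha> (zr z)"
      proof -
      have Lx: "L (axis i (z $ i)) = \<alpha> $ i * zr z $ i" for i using Lax[of i "z $ i"] by (simp add: \<alpha>_def zr_def)
      show ?thesis by (simp only: Lx inner_vec_def inner_real_def)
    qed
    finally have "L z = inner \<alpha> (zr z)" .
    moreover have "\<gamma> z = exp (L z)" using pos[of z] by (simp add: L_def)
    ultimately show ?thesis by simp
  qed
  then show ?thesis by blast
qed

lemma rtranclp_exit:
  assumes "R\<^sup>*\<^sup>* i j" "i \<in> Z" "j \<notin> Z"
  shows "\<exists>u w. R u w \<and> u \<in> Z \<and> w \<notin> Z"
  using assms by (induction rule: rtranclp_induct) auto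

lemma prop_zero:
  fixes A :: "'x \<Rightarrow> 'x \<Rightarrow> real"
  assumes fin: "finite V"
    and nonneg: "\<forall>i\<in>V. \<forall>j\<in>V. 0 \<le> A i j"
    and irr: "\<forall>i\<in>V. \<forall>j\<in>V. (\<lambda>i j. i \<in> V \<and> j \<in> V \<and> A i j > 0)\<^sup>*\<^sup>* i j"
    and xnn: "\<forall>i\<in>V. 0 \<le> x i"
    and eig: "\<forall>i\<in>V. (\<Sum>j\<in>V. A i j * x j) = r * x i"
    and i0: "i0 \<in> V" "x i0 = 0"
  shows "\<forall>j\<in>V. x j = 0"
proof
  fix j assume j: "j \<in> V"
  have step: "x w = 0" if "k \<in> V" "w \<in> V" "A k w > 0" "x k = 0" for k w
  proof -
    have "(\<Sum>j\<in>V. A k j * x j) = 0" using eig that by simp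
    moreover have "\<forall>j\<in>V. 0 \<le> A k j * x j" using nonneg xnn that(1) by simp
    ultimately have "\<forall>j\<in>V. A k j * x j = 0" using fin by (simp add: sum_nonneg_eq_0_iff)
    then show ?thesis using that by auto
  qed
  have "(\<lambda>i j. i \<in> V \<and> j \<in> V \<and> A i j > 0)\<^sup>*\<^sup>* i0 j" using irr i0 j by blast
  then show "x j = 0"
    by (induction rule: rtranclp_induct) (use i0 step in auto)
qed

lemma improve:
  fixes A :: "'x \<Rightarrow> 'x \<Rightarrow> real"
  assumes fin: "finite V"
    and nonneg: "\<forall>i\<in>V. \<forall>j\<in>V. 0 \<le> A i j"
    and irr: "\<forall>i\<in>V. \<forall>j\<in>V. (\<lambda>i j. i \<in> V \<and> j \<in> V \<and> A i j > 0)\<^sup>*\<^sup>* i j"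
  shows "\<And>x. card {i\<in>V. (\<Sum>j\<in>V. A i j * x j) - r * x i = 0} = n \<Longrightarrow> (\<forall>i\<in>V. x i \<ge> 0)
    \<Longrightarrow> (\<forall>i\<in>V. (\<Sum>j\<in>V. A i j * x j) - r * x i \<ge> 0)
    \<Longrightarrow> (\<exists>i\<in>V. (\<Sum>j\<in>V. A i j * x j) - r * x i \<noteq> 0)
    \<Longrightarrow> \<exists>x' \<epsilon>. \<epsilon> > 0 \<and> (\<forall>i\<in>V. x' i \<ge> 0) \<and> (\<exists>i\<in>V. x' i > 0)
           \<and> (\<forall>i\<in>V. (\<Sum>j\<in>V. A i j * x' j) \<ge> (r + \<epsilon>) * x' i)"
proof (induction n rule: less_induct)
  case (less n x)
  define y where "y i = (\<Sum>j\<in>V. A i j * x j) - r * x i" for i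
  define Z where "Z = {i\<in>V. y i = 0}"
  have ynn: "\<forall>i\<in>V. y i \<ge> 0" using less.prems(3) by (simp add: y_def)
  obtain i1 where i1: "i1 \<in> V" "y i1 \<noteq> 0" using less.prems(4) by (auto simp: y_def)
  have cardZ: "card Z = n" using less.prems(1) by (simp add: Z_def y_def)
  show ?case
  proof (cases "Z = {}")
    case True
    then have ypos: "\<forall>i\<in>V. y i > 0" using ynn by (force simp: Z_def)
    have xnz: "\<exists>i\<in>V. x i > 0"
    proof (rule ccontr)
      assume "\<not> ?thesis"
      then have "\<forall>i\<in>V. x i = 0" using less.prems(2) by force
      then have "y i1 = 0" using i1(1) by (simp add: y_def)
      with i1 show False by simp
    qed
    define \<epsilon> where "\<epsilon> = Min ((\<lambda>i. y i / (x i + 1)) ` V)"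
    have Vne: "V \<noteq> {}" using i1 by auto
    have epos: "\<epsilon> > 0" unfolding \<epsilon>_def using fin Vne ypos less.prems(2)
      by (subst Min_gr_iff) auto
    have "\<forall>i\<in>V. (\<Sum>j\<in>V. A i j * x j) \<ge> (r + \<epsilon>) * x i"
    proof
      fix i assume i: "i \<in> V"
      have "\<epsilon> \<le> y i / (x i + 1)" unfolding \<epsilon>_def using fin i by (intro Min_le) auto
      moreover have "x i + 1 > 0" using less.prems(2) i by force
      ultimately have "\<epsilon> * (x i + 1) \<le> y i" by (simp add: pos_le_divide_eq)
      then have "\<epsilon> * x i \<le> y i" using epos by (simp add: algebra_simps)
      then show "(\<Sum>j\<in>V. A i j * x j) \<ge> (r + \<epsilon>) * x i" by (simp add: y_def algebra_simps)
    qed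
    then show ?thesis using epos less.prems(2) xnz by blast
  next
    case False
    then obtain i0 where i0: "i0 \<in> Z" by blast
    define \<delta> where "\<delta> = 1 / (\<bar>r\<bar> + 1)"
    have dpos: "\<delta> > 0" by (simp add: \<delta>_def)
    have drl: "1 - \<delta> * r > 0"
    proof -
      have "\<delta> * r \<le> \<delta> * \<bar>r\<bar>" using dpos by (simp add: mult_left_mono)
      also have "\<delta> * \<bar>r\<bar> < 1" by (simp add: \<delta>_def)
      finally show ?thesis by simp
    qed
    define x' where "x' i = x i + \<delta> * y i" for i
    define Ay where "Ay i = (\<Sum>j\<in>V. A i j * y j)" for i
    have Aynn: "\<forall>i\<in>V. Ay i \<ge> 0" unfolding Ay_def using nonneg ynn by (auto intro: sum_nonneg)
    define y' where "y' i = (\<Sum>j\<in>V. A i j * x' j) - r * x' i" for i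
    have y'eq: "y' i = (1 - \<delta> * r) * y i + \<delta> * Ay i" for i
    proof -
      have "(\<Sum>j\<in>V. A i j * x' j) = (\<Sum>j\<in>V. A i j * x j) + \<delta> * Ay i"
        by (simp add: x'_def Ay_def algebra_simps sum.distrib sum_distrib_left)
      then show ?thesis by (simp add: y'_def x'_def y_def algebra_simps)
    qed
    have y'nn: "\<forall>i\<in>V. y' i \<ge> 0" using y'eq ynn Aynn drl dpos by simp
    have y'ge: "\<forall>i\<in>V. y' i \<ge> (1 - \<delta> * r) * y i" using y'eq Aynn dpos by simp
    have Z'sub: "{i\<in>V. y' i = 0} \<subseteq> Z"
    proof
      fix i assume "i \<in> {i\<in>V. y' i = 0}"
      then have "i \<in> V" "y' i = 0" by auto
      then have "(1 - \<delta> * r) * y i \<le> 0" using y'ge by force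
      then have "y i \<le> 0" using drl by (simp add: mult_le_0_iff)
      then show "i \<in> Z" using ynn \<open>i \<in> V\<close> by (force simp: Z_def)
    qed
    have i1Z: "i1 \<notin> Z" using i1 by (simp add: Z_def)
    have "(\<lambda>i j. i \<in> V \<and> j \<in> V \<and> A i j > 0)\<^sup>*\<^sup>* i0 i1" using irr i0 i1 by (auto simp: Z_def)
    from rtranclp_exit[OF this i0 i1Z] obtain u w where uw: "u \<in> V" "w \<in> V" "A u w > 0" "u \<in> Z" "w \<notin> Z"
      by blast
    have yw: "y w > 0" using uw ynn by (force simp: Z_def)
    have "A u w * y w \<le> Ay u" unfolding Ay_def
      by (rule member_le_sum[where f="\<lambda>j. A u j * y j"]) (use uw fin nonneg ynn in auto)
    moreover have "A u w * y w > 0" using uw yw by simp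
    ultimately have "Ay u > 0" by simp
    moreover have "y u = 0" using uw by (simp add: Z_def)
    ultimately have y'u: "y' u > 0" using y'eq dpos by simp
    have Zp: "{i\<in>V. y' i = 0} \<subset> Z" using Z'sub y'u uw by auto
    have "card {i\<in>V. y' i = 0} < n"
      using psubset_card_mono[OF _ Zp] fin cardZ by (simp add: Z_def)
    moreover have "\<forall>i\<in>V. x' i \<ge> 0" using less.prems(2) ynn dpos by (simp add: x'_def)
    ultimately have c1: "card {i\<in>V. (\<Sum>j\<in>V. A i j * x' j) - r * x' i = 0} < n"
      and c2: "\<forall>i\<in>V. x' i \<ge> 0" by (simp_all add: y'_def)
    have c3: "\<forall>i\<in>V. 0 \<le> (\<Sum>j\<in>V. A i j * x' j) - r * x' i" using y'nn by (simp add: y'_def)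
    have c4: "\<exists>i\<in>V. (\<Sum>j\<in>V. A i j * x' j) - r * x' i \<noteq> 0"
      using y'u uw(1) unfolding y'_def by (intro bexI[of _ u]) auto
    show ?thesis using less.IH[OF c1 refl c2 c3 c4] .
  qed
qed

lemma compact_box:
  fixes V :: "'x set"
  shows "compact {x :: 'x \<Rightarrow> real. \<forall>i. x i \<in> (if i \<in> V then {0..1} else {0})}"
proof -
  define F where "F i = (if i \<in> V then {0..1::real} else {0})" for i
  have eq: "{x :: 'x \<Rightarrow> real. \<forall>i. x i \<in> (if i \<in> V then {0..1} else {0})} = PiE UNIV F"
    by (auto simp: PiE_def extensional_def Pi_def F_def)
  have "compactin (product_topology (\<lambda>i. euclidean) UNIV) (PiE UNIV F)"
    by (subst compactin_PiE) (auto simp: F_def)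
  then show ?thesis unfolding eq euclidean_product_topology by simp
qed

lemma cont_snd_coord: "continuous_on UNIV (\<lambda>p::real \<times> ('x \<Rightarrow> real). snd p i)"
  by (rule continuous_on_product_then_coordinatewise[where f=snd]) (rule continuous_on_snd[OF continuous_on_id])

lemma PF_exist:
  fixes A :: "'x \<Rightarrow> 'x \<Rightarrow> real"
  assumes fin: "finite V" and ne: "V \<noteq> {}"
    and nonneg: "\<forall>i\<in>V. \<forall>j\<in>V. 0 \<le> A i j"
    and irr: "\<forall>i\<in>V. \<forall>j\<in>V. (\<lambda>i j. i \<in> V \<and> j \<in> V \<and> A i j > 0)\<^sup>*\<^sup>* i j"
  shows "\<exists>\<phi> r. (\<forall>v\<in>V. \<phi> v > 0) \<and> (\<forall>v\<in>V. (\<Sum>w\<in>V. A v w * \<phi> w) = r * \<phi> v)"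
proof -
  define Rb where "Rb = (\<Sum>i\<in>V. \<Sum>j\<in>V. A i j)"
  have bound: "t \<le> Rb" if xnn: "\<forall>i\<in>V. x i \<ge> 0" and xp: "\<exists>i\<in>V. x i > 0"
    and ineq: "\<forall>i\<in>V. (\<Sum>j\<in>V. A i j * x j) \<ge> t * x i" for x t
  proof -
    define m where "m = Max (x ` V)"
    have "m \<in> x ` V" unfolding m_def using fin ne by (intro Max_in) auto
    then obtain i0 where i0: "i0 \<in> V" "x i0 = m" by auto
    have xle: "x j \<le> m" if "j \<in> V" for j unfolding m_def using fin that by (intro Max_ge) auto
    have mpos: "m > 0" using xp xle by force
    have "t * m \<le> (\<Sum>j\<in>V. A i0 j * x j)" using ineq i0 by force
    also have "\<dots> \<le> (\<Sum>j\<in>V. A i0 j * m)"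
      by (rule sum_mono) (use nonneg i0 xle in \<open>auto intro: mult_left_mono\<close>)
    also have "\<dots> = m * (\<Sum>j\<in>V. A i0 j)" by (simp add: sum_distrib_left mult.commute)
    also have "(\<Sum>j\<in>V. A i0 j) \<le> Rb" unfolding Rb_def
      by (rule member_le_sum[where f="\<lambda>i. \<Sum>j\<in>V. A i j"]) (use i0 fin nonneg in \<open>auto intro: sum_nonneg\<close>)
    then have "m * (\<Sum>j\<in>V. A i0 j) \<le> m * Rb" using mpos by simp
    finally show "t \<le> Rb" using mpos by simp
  qed
  have Rb0: "Rb \<ge> 0" unfolding Rb_def using nonneg by (auto intro!: sum_nonneg)
  define Box where "Box = {x :: 'x \<Rightarrow> real. \<forall>i. x i \<in> (if i \<in> V then {0..1} else {0})}"
  define C where "C = {p :: real \<times> ('x \<Rightarrow> real). (\<Sum>i\<in>V. snd p i) = 1}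
      \<inter> (\<Inter>i\<in>V. {p. fst p * snd p i \<le> (\<Sum>j\<in>V. A i j * snd p j)})"
  define KK where "KK = ({0..Rb} \<times> Box) \<inter> C"
  have c1: "closed {p :: real \<times> ('x \<Rightarrow> real). (\<Sum>i\<in>V. snd p i) = 1}"
    by (rule closed_Collect_eq) (auto intro!: continuous_on_sum cont_snd_coord)
  have c2: "closed {p :: real \<times> ('x \<Rightarrow> real). fst p * snd p i \<le> (\<Sum>j\<in>V. A i j * snd p j)}" for i
    by (rule closed_Collect_le) (auto intro!: continuous_on_sum cont_snd_coord continuous_on_mult continuous_on_fst continuous_on_id)
  have "closed C" unfolding C_def
    by (intro closed_Int c1 closed_INT ballI c2)
  then have cK: "compact KK" unfolding KK_def Box_def
    by (intro compact_Int_closed compact_Times compact_box) auto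
  define x1 where "x1 i = (if i \<in> V then 1 / real (card V) else 0)" for i
  have cV: "card V > 0" using fin ne by (simp add: card_gt_0_iff)
  have f1: "\<forall>i. x1 i \<in> (if i \<in> V then {0..1} else {0})" using cV by (auto simp: x1_def)
  have f2: "(\<Sum>i\<in>V. x1 i) = 1" using cV by (simp add: x1_def)
  have f3: "\<forall>i\<in>V. 0 * x1 i \<le> (\<Sum>j\<in>V. A i j * x1 j)" using nonneg by (auto simp: x1_def intro!: sum_nonneg)
  have "(0, x1) \<in> KK" unfolding KK_def C_def Box_def using Rb0 f1 f2 f3 by auto
  then have neK: "KK \<noteq> {}" by auto
  obtain p where pK: "p \<in> KK" and pmax: "\<forall>q\<in>KK. fst q \<le> fst p"
    using continuous_attains_sup[OF cK neK continuous_on_fst[OF continuous_on_id]] by auto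
  obtain r x where p: "p = (r, x)" by (cases p)
  have r0: "r \<ge> 0" and xbox: "x \<in> Box" and xsum: "(\<Sum>i\<in>V. x i) = 1"
    and xineq: "\<forall>i\<in>V. r * x i \<le> (\<Sum>j\<in>V. A i j * x j)"
    using pK by (auto simp: KK_def C_def p)
  have xnn: "\<forall>i\<in>V. x i \<ge> 0"
  proof
    fix i assume "i \<in> V" then show "x i \<ge> 0" using xbox unfolding Box_def by (metis (mono_tags, lifting) atLeastAtMost_iff mem_Collect_eq)
  qed
  have eig: "\<forall>i\<in>V. (\<Sum>j\<in>V. A i j * x j) = r * x i"
  proof (rule ccontr)
    assume "\<not> ?thesis"
    then have ex: "\<exists>i\<in>V. (\<Sum>j\<in>V. A i j * x j) - r * x i \<noteq> 0" by auto
    have ge: "\<forall>i\<in>V. (\<Sum>j\<in>V. A i j * x j) - r * x i \<ge> 0" using xineq by auto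
    obtain x' \<epsilon> where e: "\<epsilon> > 0" and x'nn: "\<forall>i\<in>V. x' i \<ge> 0" and x'p: "\<exists>i\<in>V. x' i > 0"
      and x'ineq: "\<forall>i\<in>V. (\<Sum>j\<in>V. A i j * x' j) \<ge> (r + \<epsilon>) * x' i"
      using improve[OF fin nonneg irr refl xnn ge ex] by blast
    have rb: "r + \<epsilon> \<le> Rb" by (rule bound[OF x'nn x'p x'ineq])
    define s where "s = (\<Sum>i\<in>V. x' i)"
    have spos: "s > 0"
    proof -
      obtain i where "i \<in> V" "x' i > 0" using x'p by blast
      then show ?thesis unfolding s_def using fin x'nn by (intro sum_pos2[of V i]) auto
    qed
    define x'' where "x'' i = (if i \<in> V then x' i / s else 0)" for i
    have x'le: "x' i \<le> s" if "i \<in> V" for i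
      unfolding s_def by (rule member_le_sum) (use that x'nn fin in auto)
    have g1: "0 \<le> r + \<epsilon> \<and> r + \<epsilon> \<le> Rb" using r0 e rb by simp
    have g2: "\<forall>i. x'' i \<in> (if i \<in> V then {0..1} else {0})"
      using x'nn x'le spos by (auto simp: x''_def)
    have "(\<Sum>i\<in>V. x'' i) = (\<Sum>i\<in>V. x' i / s)" by (rule sum.cong) (auto simp: x''_def)
    also have "\<dots> = 1" using spos by (simp add: s_def sum_divide_distrib[symmetric])
    finally have g3: "(\<Sum>i\<in>V. x'' i) = 1" .
    have g4: "\<forall>i\<in>V. (r + \<epsilon>) * x'' i \<le> (\<Sum>j\<in>V. A i j * x'' j)"
    proof
      fix i assume i: "i \<in> V"
      have "(\<Sum>j\<in>V. A i j * x'' j) = (\<Sum>j\<in>V. A i j * x' j / s)"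
        by (rule sum.cong) (auto simp: x''_def)
      also have "\<dots> = (\<Sum>j\<in>V. A i j * x' j) / s" by (simp add: sum_divide_distrib)
      finally have "(\<Sum>j\<in>V. A i j * x'' j) = (\<Sum>j\<in>V. A i j * x' j) / s" .
      moreover have "(r + \<epsilon>) * x'' i = (r + \<epsilon>) * x' i / s" using i by (simp add: x''_def)
      ultimately show "(r + \<epsilon>) * x'' i \<le> (\<Sum>j\<in>V. A i j * x'' j)"
        using x'ineq i spos by (simp add: divide_right_mono)
    qed
    have "(r + \<epsilon>, x'') \<in> KK" unfolding KK_def C_def Box_def using g1 g2 g3 g4 by auto
    then have "r + \<epsilon> \<le> r" using pmax p by force
    with e show False by simp
  qed
  have "\<forall>v\<in>V. x v > 0"
  proof (rule ccontr)
    assume "\<not> ?thesis"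
    then obtain i0 where "i0 \<in> V" "x i0 = 0" using xnn by force
    from prop_zero[OF fin nonneg irr xnn eig this] have "\<forall>j\<in>V. x j = 0" .
    then have "(\<Sum>i\<in>V. x i) = 0" by simp
    with xsum show False by simp
  qed
  with eig show ?thesis by blast
qed

lemma eig_finite:
  fixes A :: "'x \<Rightarrow> 'x \<Rightarrow> real"
  assumes fin: "finite V"
  shows "finite (eigenvalues_on V A)"
proof -
  obtain vs where vs: "set vs = V" "distinct vs" using finite_distinct_list[OF fin] by blast
  define n where "n = length vs"
  define AM :: "complex mat" where "AM = mat n n (\<lambda>(i,j). complex_of_real (A (vs!i) (vs!j)))"
  have AMc: "AM \<in> carrier_mat n n" by (simp add: AM_def)
  have img: "nth vs ` {0..<n} = V" using vs by (simp add: n_def nth_image)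
  have inj: "inj_on (nth vs) {0..<n}" using vs by (intro inj_on_nth) (auto simp: n_def)
  have "eigenvalues_on V A \<subseteq> spectrum AM"
  proof
    fix \<mu> assume "\<mu> \<in> eigenvalues_on V A"
    then obtain u :: "'x \<Rightarrow> complex" where u: "\<exists>v\<in>V. u v \<noteq> 0"
      and eq: "\<forall>v\<in>V. (\<Sum>w\<in>V. complex_of_real (A v w) * u w) = \<mu> * u v"
      by (auto simp: eigenvalues_on_def)
    define vv where "vv = vec n (\<lambda>i. u (vs!i))"
    have "vv \<noteq> 0\<^sub>v n"
    proof
      assume "vv = 0\<^sub>v n"
      obtain v where v: "v \<in> V" "u v \<noteq> 0" using u by blast
      then obtain k where k: "k < n" "vs!k = v" using img by force
      have "vv $ k = 0" using \<open>vv = 0\<^sub>v n\<close> k by simp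
      then show False using k v by (simp add: vv_def)
    qed
    moreover have "AM *\<^sub>v vv = \<mu> \<cdot>\<^sub>v vv"
    proof (rule eq_vecI)
      show "dim_vec (AM *\<^sub>v vv) = dim_vec (\<mu> \<cdot>\<^sub>v vv)" by (simp add: AM_def vv_def)
      fix i assume "i < dim_vec (\<mu> \<cdot>\<^sub>v vv)"
      then have i: "i < n" by (simp add: vv_def)
      have "(AM *\<^sub>v vv) $ i = (\<Sum>j\<in>{0..<n}. complex_of_real (A (vs!i) (vs!j)) * u (vs!j))"
        using i by (simp add: AM_def vv_def scalar_prod_def)
      also have "\<dots> = (\<Sum>w\<in>V. complex_of_real (A (vs!i) w) * u w)"
        unfolding img[symmetric] by (simp add: sum.reindex[OF inj])
      also have "\<dots> = \<mu> * u (vs!i)" using eq i img by force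
      finally show "(AM *\<^sub>v vv) $ i = (\<mu> \<cdot>\<^sub>v vv) $ i" using i by (simp add: vv_def)
    qed
    ultimately have "eigenvector AM vv \<mu>" unfolding eigenvector_def by (simp add: AM_def vv_def)
    then show "\<mu> \<in> spectrum AM" by (auto simp: spectrum_def eigenvalue_def)
  qed
  then show ?thesis using card_finite_spectrum(1)[OF AMc] finite_subset by blast
qed

lemma PF_eigenvalue_eq:
  fixes A :: "'x \<Rightarrow> 'x \<Rightarrow> real"
  assumes fin: "finite V" and ne: "V \<noteq> {}"
    and nonneg: "\<forall>i\<in>V. \<forall>j\<in>V. 0 \<le> A i j"
    and pos: "\<forall>v\<in>V. \<phi> v > 0"
    and eig: "\<forall>v\<in>V. (\<Sum>w\<in>V. A v w * \<phi> w) = r * \<phi> v"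
  shows "PF_eigenvalue V A = r"
proof -
  obtain v1 where v1: "v1 \<in> V" using ne by blast
  have r0: "r \<ge> 0"
  proof -
    have "0 \<le> (\<Sum>w\<in>V. A v1 w * \<phi> w)" using nonneg pos v1 by (auto intro!: sum_nonneg)
    then have "0 \<le> r * \<phi> v1" using eig v1 by simp
    moreover have "\<phi> v1 > 0" using pos v1 by blast
    ultimately show ?thesis by (simp add: zero_le_mult_iff)
  qed
  have rin: "complex_of_real r \<in> eigenvalues_on V A"
    unfolding eigenvalues_on_def
  proof (intro CollectI exI[of _ "\<lambda>v. complex_of_real (\<phi> v)"] conjI)
    show "\<exists>v\<in>V. complex_of_real (\<phi> v) \<noteq> 0" using v1 pos by force
    show "\<forall>v\<in>V. (\<Sum>w\<in>V. complex_of_real (A v w) * complex_of_real (\<phi> w)) = complex_of_real r * complex_of_real (\<phi> v)"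
    proof
      fix v assume "v \<in> V"
      have "(\<Sum>w\<in>V. complex_of_real (A v w) * complex_of_real (\<phi> w)) = complex_of_real (\<Sum>w\<in>V. A v w * \<phi> w)"
        by simp
      also have "\<dots> = complex_of_real (r * \<phi> v)" using eig \<open>v \<in> V\<close> by simp
      finally show "(\<Sum>w\<in>V. complex_of_real (A v w) * complex_of_real (\<phi> w)) = complex_of_real r * complex_of_real (\<phi> v)" by simp
    qed
  qed
  have le: "cmod \<mu> \<le> r" if mu: "\<mu> \<in> eigenvalues_on V A" for \<mu>
  proof -
    obtain u :: "'x \<Rightarrow> complex" where u: "\<exists>v\<in>V. u v \<noteq> 0"
      and eq: "\<forall>v\<in>V. (\<Sum>w\<in>V. complex_of_real (A v w) * u w) = \<mu> * u v"
      using mu by (auto simp: eigenvalues_on_def)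
    define m where "m = Max ((\<lambda>v. cmod (u v) / \<phi> v) ` V)"
    have "m \<in> (\<lambda>v. cmod (u v) / \<phi> v) ` V" unfolding m_def using fin ne by (intro Max_in) auto
    then obtain v0 where v0: "v0 \<in> V" "m = cmod (u v0) / \<phi> v0" by auto
    have mge: "cmod (u w) / \<phi> w \<le> m" if "w \<in> V" for w unfolding m_def using fin that by (intro Max_ge) auto
    have mge': "cmod (u w) \<le> m * \<phi> w" if "w \<in> V" for w
      using mge[OF that] pos that by (simp add: pos_divide_le_eq)
    obtain v2 where v2: "v2 \<in> V" "u v2 \<noteq> 0" using u by blast
    have mpos: "m > 0" using mge[OF v2(1)] v2 pos by (smt (verit) divide_pos_pos zero_less_norm_iff)
    have "\<phi> v0 > 0" using v0 pos by blast
    then have uv0: "cmod (u v0) = m * \<phi> v0" using v0 by simp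
    have "cmod \<mu> * cmod (u v0) = cmod (\<Sum>w\<in>V. complex_of_real (A v0 w) * u w)"
      using eq v0(1) by (simp add: norm_mult)
    also have "\<dots> \<le> (\<Sum>w\<in>V. cmod (complex_of_real (A v0 w) * u w))" by (rule norm_sum)
    also have "\<dots> = (\<Sum>w\<in>V. A v0 w * cmod (u w))"
      by (rule sum.cong) (use nonneg v0(1) in \<open>auto simp: norm_mult\<close>)
    also have "\<dots> \<le> (\<Sum>w\<in>V. A v0 w * (m * \<phi> w))"
      by (rule sum_mono) (use nonneg v0(1) mge' in \<open>auto intro: mult_left_mono\<close>)
    also have "\<dots> = m * (\<Sum>w\<in>V. A v0 w * \<phi> w)" by (simp add: sum_distrib_left algebra_simps)
    also have "\<dots> = r * (m * \<phi> v0)" using eig v0(1) by simp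
    finally have "cmod \<mu> * (m * \<phi> v0) \<le> r * (m * \<phi> v0)" using uv0 by simp
    moreover have "m * \<phi> v0 > 0" using mpos \<open>\<phi> v0 > 0\<close> by simp
    ultimately show ?thesis by (meson mult_le_cancel_right_pos)
  qed
  have "Max (cmod ` eigenvalues_on V A) = r"
  proof (rule Max_eqI)
    show "finite (cmod ` eigenvalues_on V A)" using eig_finite[OF fin] by simp
    show "\<And>y. y \<in> cmod ` eigenvalues_on V A \<Longrightarrow> y \<le> r" using le by auto
    show "r \<in> cmod ` eigenvalues_on V A" using rin r0 by force
  qed
  then show ?thesis by (simp add: PF_eigenvalue_def)
qed

lemma PF_unique:
  fixes A :: "'x \<Rightarrow> 'x \<Rightarrow> real"
  assumes fin: "finite V" and ne: "V \<noteq> {}"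
    and nonneg: "\<forall>i\<in>V. \<forall>j\<in>V. 0 \<le> A i j"
    and irr: "\<forall>i\<in>V. \<forall>j\<in>V. (\<lambda>i j. i \<in> V \<and> j \<in> V \<and> A i j > 0)\<^sup>*\<^sup>* i j"
    and pos1: "\<forall>v\<in>V. \<phi> v > 0" and eig1: "\<forall>v\<in>V. (\<Sum>w\<in>V. A v w * \<phi> w) = r * \<phi> v"
    and pos2: "\<forall>v\<in>V. \<psi> v > 0" and eig2: "\<forall>v\<in>V. (\<Sum>w\<in>V. A v w * \<psi> w) = r * \<psi> v"
  shows "\<exists>t. \<forall>v\<in>V. \<phi> v = t * \<psi> v"
proof -
  define t where "t = Min ((\<lambda>v. \<phi> v / \<psi> v) ` V)"
  have "t \<in> (\<lambda>v. \<phi> v / \<psi> v) ` V" unfolding t_def using fin ne by (intro Min_in) auto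
  then obtain v0 where v0: "v0 \<in> V" "t = \<phi> v0 / \<psi> v0" by auto
  have tle: "t \<le> \<phi> w / \<psi> w" if "w \<in> V" for w unfolding t_def using fin that by (intro Min_le) auto
  define u where "u v = \<phi> v - t * \<psi> v" for v
  have unn: "\<forall>v\<in>V. 0 \<le> u v"
  proof
    fix v assume v: "v \<in> V"
    then have "t * \<psi> v \<le> \<phi> v" using tle[OF v] pos2 by (simp add: le_divide_eq)
    then show "0 \<le> u v" by (simp add: u_def)
  qed
  have "\<psi> v0 > 0" using v0 pos2 by blast
  then have u0: "u v0 = 0" using v0 by (simp add: u_def)
  have ueig: "\<forall>v\<in>V. (\<Sum>w\<in>V. A v w * u w) = r * u v"
  proof
    fix v assume v: "v \<in> V"
    have "(\<Sum>w\<in>V. A v w * u w) = (\<Sum>w\<in>V. A v w * \<phi> w) - t * (\<Sum>w\<in>V. A v w * \<psi> w)"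
      by (simp add: u_def algebra_simps sum_subtractf sum_distrib_left)
    also have "\<dots> = r * u v" using eig1 eig2 v by (simp add: u_def algebra_simps)
    finally show "(\<Sum>w\<in>V. A v w * u w) = r * u v" .
  qed
  have "\<forall>j\<in>V. u j = 0" by (rule prop_zero[OF fin nonneg irr unn ueig v0(1) u0])
  then show ?thesis by (auto simp: u_def)
qed

locale setting =
  fixes b :: "'x \<Rightarrow> 'x \<Rightarrow> real" and c :: "'x \<Rightarrow> real"
    and act :: "int ^ 'd::finite \<Rightarrow> 'x \<Rightarrow> 'x" and V :: "'x set" and x0 :: 'x
  assumes graph: "is_graph b" and lf: "locally_finite b" and conn: "connected_graph b"
    and act: "is_action act" and finV: "finite V" and fd: "fundamental_domain act V"
    and inv: "H_invariant b c act"
begin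

lemma act0[simp]: "act 0 x = x" using act by (simp add: is_action_def)
lemma act_add: "act (z + w) x = act z (act w x)" using act by (simp add: is_action_def)
lemma act_neg[simp]: "act (- z) (act z x) = x" "act z (act (- z) x) = x"
  by (metis act0 act_add add.left_inverse) (metis act0 act_add add.right_inverse)

lemma fd_ex: obtains z v where "v \<in> V" "x = act z v"
  using fd unfolding fundamental_domain_def by (metis prod.collapse)

lemma fd_uniq: assumes "v \<in> V" "w \<in> V" "act z v = act z' w" shows "z = z' \<and> v = w"
proof -
  have "\<exists>!p. snd p \<in> V \<and> act z v = act (fst p) (snd p)" using fd unfolding fundamental_domain_def by blast
  then have "(z, v) = (z', w)" using assms by (metis fst_conv snd_conv)
  then show ?thesis by simp
qed

lemma coord_eq: assumes "v \<in> V" shows "coord act V (act z v) = (z, v)"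
  unfolding coord_def
proof (rule the_equality)
  show "snd (z, v) \<in> V \<and> act z v = act (fst (z, v)) (snd (z, v))" using assms by simp
  fix p assume "snd p \<in> V \<and> act z v = act (fst p) (snd p)"
  then show "p = (z, v)" using fd_uniq[of v "snd p" z "fst p"] assms by (metis prod.collapse)
qed

lemma Vne: "V \<noteq> {}" using fd_ex by blast

lemma mult_fun_act: "v \<in> V \<Longrightarrow> mult_fun act V \<alpha> \<phi> (act z v) = exp (inner \<alpha> (zr z)) * \<phi> v"
  by (simp add: mult_fun_def coord_eq)

lemma mult_fun_V: "v \<in> V \<Longrightarrow> mult_fun act V \<alpha> \<phi> v = \<phi> v"
  using mult_fun_act[of v \<alpha> \<phi> 0] by (simp add: zr_0)

lemma mult_fun_shift: "mult_fun act V \<alpha> \<phi> (act z x) = exp (inner \<alpha> (zr z)) * mult_fun act V \<alpha> \<phi> x"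
proof -
  obtain z' v where v: "v \<in> V" "x = act z' v" by (rule fd_ex)
  have "act z x = act (z + z') v" using v by (simp add: act_add)
  then show ?thesis using v by (simp add: mult_fun_act exp_zr_add)
qed

lemma mult_fun_div: "mult_fun act V \<alpha> (\<lambda>v. \<phi> v / s) x = mult_fun act V \<alpha> \<phi> x / s"
  by (simp add: mult_fun_def split: prod.split)

definition N where "N x = {y. b x y \<noteq> 0}"

lemma bnn: "b x y \<ge> 0" using graph by (simp add: is_graph_def)

lemma finN: "finite (N x)"
proof -
  have "N x = {y. b x y > 0}" using bnn by (auto simp: N_def order_less_le)
  then show ?thesis using lf by (simp add: locally_finite_def)
qed

lemma DomH_all: "f \<in> DomH b"
  unfolding DomH_def
  by (auto intro!: fin_supp_infsum(1)[OF finN] simp: N_def)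

lemma Hop_fin: "Hop b c f x = (\<Sum>y\<in>N x. b x y * (f x - f y)) + c x * f x"
  unfolding Hop_def by (subst fin_supp_infsum(2)[OF finN]) (auto simp: N_def)

lemma deg_fin: "deg b c x = (\<Sum>y\<in>N x. b x y) + c x"
  unfolding deg_def by (subst fin_supp_infsum(2)[OF finN]) (auto simp: N_def)

lemma Hop_alt: "Hop b c f x = deg b c x * f x - (\<Sum>y\<in>N x. b x y * f y)"
  by (simp add: Hop_fin deg_fin algebra_simps sum_subtractf sum_distrib_left sum_distrib_right)

lemma Hop_lin: "Hop b c (\<lambda>x. f x - t * g x) x = Hop b c f x - t * Hop b c g x"
  by (simp add: Hop_alt algebra_simps sum_subtractf sum_distrib_left)

lemma Hop_scale: "Hop b c (\<lambda>x. a * f x) x = a * Hop b c f x"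
  by (simp add: Hop_alt algebra_simps sum_distrib_left)

lemma Hop_delta: assumes "x \<noteq> y" shows "Hop b c (\<lambda>w. if w = y then 1 else 0) x = - b x y"
proof -
  have "(\<Sum>w\<in>N x. b x w * (if w = y then 1 else 0)) = (if y \<in> N x then b x y else 0)"
    by (simp add: if_distrib[of "\<lambda>t. b x _ * t"] sum.delta' finN cong: if_cong)
  also have "\<dots> = b x y" by (auto simp: N_def)
  finally show ?thesis using assms by (simp add: Hop_alt)
qed

lemma b_inv: assumes "x \<noteq> y" shows "b (act g x) (act g y) = b x y"
proof -
  define d where "d = (\<lambda>w. if w = y then 1 else (0::real))"
  have T: "Tg act g d = (\<lambda>w. if w = act g y then 1 else 0)"
    unfolding Tg_def d_def by (rule ext) (metis act_neg)
  have "Hop b c (Tg act g d) = Tg act g (Hop b c d)"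
    using inv DomH_all unfolding H_invariant_def by blast
  then have "Hop b c (Tg act g d) (act g x) = Hop b c d x"
    by (simp add: Tg_def)
  then have "Hop b c (\<lambda>w. if w = act g y then 1 else 0) (act g x) = Hop b c d x" by (simp only: T)
  moreover have "act g x \<noteq> act g y" using assms by (metis act_neg(1))
  ultimately show ?thesis using assms unfolding d_def by (simp add: Hop_delta)
qed

lemma Hop_shift:
  assumes "\<forall>z x. f (act z x) = \<gamma> z * f x"
  shows "Hop b c f (act z x) = \<gamma> z * Hop b c f x"
proof -
  have "Hop b c (Tg act (- z) f) = Tg act (- z) (Hop b c f)"
    using inv DomH_all unfolding H_invariant_def by blast
  moreover have "Tg act (- z) f = (\<lambda>x. \<gamma> z * f x)" using assms by (intro ext) (simp add: Tg_def)
  ultimately have "Hop b c (\<lambda>x. \<gamma> z * f x) x = Hop b c f (act z x)"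
    by (metis Tg_def minus_minus)
  then show ?thesis by (simp add: Hop_scale)
qed

end

context setting begin

abbreviation "MM \<equiv> Max (deg b c ` V)"

definition Zs where "Zs v w = {z. act z w \<in> N v}"

lemma finZs: "finite (Zs v w)"
proof -
  have "inj (\<lambda>z. act z w)"
  proof (rule injI)
    fix z z' assume "act z w = act z' w"
    then have "act (- z') (act z w) = w" by (metis act_neg(1))
    then have "act (z - z') w = w" by (simp add: act_add[symmetric])
    then show "z = z'"
    proof -
      obtain z1 v where v: "v \<in> V" "w = act z1 v" by (rule fd_ex)
      have "act (z - z' + z1) v = act z1 v" using \<open>act (z - z') w = w\<close> v by (simp add: act_add)
      then have "z - z' + z1 = z1" using fd_uniq[OF v(1) v(1)] by blast
      then show ?thesis by simp
    qed
  qed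
  then show ?thesis unfolding Zs_def using finN[of v] by (simp add: finite_vimageI[unfolded vimage_def])
qed

lemma K_fin: "(\<Sum>\<^sub>\<infinity>z. b v (act z w) * exp (inner \<alpha> (zr z))) = (\<Sum>z\<in>Zs v w. b v (act z w) * exp (inner \<alpha> (zr z)))"
  by (rule fin_supp_infsum(2)[OF finZs]) (auto simp: Zs_def N_def)

lemma Qmat_split: "Qmat b c act V \<alpha> v w =
    (\<Sum>z\<in>Zs v w. b v (act z w) * exp (inner \<alpha> (zr z))) + (if w = v then MM - deg b c v else 0)"
  by (simp add: Qmat_def K_fin)

lemma sum_N_reindex:
  assumes fm: "\<forall>z. \<forall>w\<in>V. f (act z w) = exp (inner \<alpha> (zr z)) * f w"
  shows "(\<Sum>y\<in>N v. b v y * f y) = (\<Sum>w\<in>V. (\<Sum>z\<in>Zs v w. b v (act z w) * exp (inner \<alpha> (zr z))) * f w)"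
proof -
  have bij: "bij_betw (\<lambda>(w, z). act z w) (Sigma V (Zs v)) (N v)"
  proof (rule bij_betwI')
    fix p q assume p: "p \<in> Sigma V (Zs v)" and q: "q \<in> Sigma V (Zs v)"
    obtain w z where pw: "p = (w, z)" "w \<in> V" using p by auto
    obtain w' z' where qw: "q = (w', z')" "w' \<in> V" using q by auto
    show "((case p of (w, z) \<Rightarrow> act z w) = (case q of (w, z) \<Rightarrow> act z w)) = (p = q)"
      using fd_uniq[of w w' z z'] pw qw by auto
  next
    fix p assume "p \<in> Sigma V (Zs v)"
    then show "(case p of (w, z) \<Rightarrow> act z w) \<in> N v" by (auto simp: Zs_def)
  next
    fix y assume "y \<in> N v"
    obtain z w where "w \<in> V" "y = act z w" by (rule fd_ex)
    then show "\<exists>p\<in>Sigma V (Zs v). y = (case p of (w, z) \<Rightarrow> act z w)"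
      using \<open>y \<in> N v\<close> by (intro bexI[of _ "(w, z)"]) (auto simp: Zs_def)
  qed
  have "(\<Sum>y\<in>N v. b v y * f y) = (\<Sum>p\<in>Sigma V (Zs v). (\<lambda>y. b v y * f y) ((\<lambda>(w, z). act z w) p))"
    by (rule sum.reindex_bij_betw[OF bij, symmetric])
  also have "\<dots> = (\<Sum>w\<in>V. \<Sum>z\<in>Zs v w. b v (act z w) * f (act z w))"
    by (subst sum.Sigma) (auto simp: finV finZs split_def)
  also have "\<dots> = (\<Sum>w\<in>V. (\<Sum>z\<in>Zs v w. b v (act z w) * exp (inner \<alpha> (zr z))) * f w)"
    by (rule sum.cong) (use fm in \<open>auto simp: sum_distrib_right intro!: sum.cong\<close>)
  finally show ?thesis .
qed

lemma Hop_V: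
  assumes fm: "\<forall>z. \<forall>w\<in>V. f (act z w) = exp (inner \<alpha> (zr z)) * f w" and v: "v \<in> V"
  shows "Hop b c f v = MM * f v - (\<Sum>w\<in>V. Qmat b c act V \<alpha> v w * f w)"
proof -
  have "(\<Sum>w\<in>V. Qmat b c act V \<alpha> v w * f w)
      = (\<Sum>w\<in>V. (\<Sum>z\<in>Zs v w. b v (act z w) * exp (inner \<alpha> (zr z))) * f w
            + (if w = v then (MM - deg b c v) * f w else 0))"
    by (rule sum.cong) (auto simp: Qmat_split algebra_simps)
  also have "\<dots> = (\<Sum>y\<in>N v. b v y * f y) + (MM - deg b c v) * f v"
    using v finV by (simp add: sum.distrib sum_N_reindex[OF fm])
  finally show ?thesis by (simp add: Hop_alt algebra_simps)
qed

lemma harmonic_iff: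
  assumes fm: "\<forall>z x. f (act z x) = exp (inner \<alpha> (zr z)) * f x"
  shows "harmonic b c lam f \<longleftrightarrow> (\<forall>v\<in>V. (\<Sum>w\<in>V. Qmat b c act V \<alpha> v w * f w) = (MM - lam) * f v)"
proof -
  have fmV: "\<forall>z. \<forall>w\<in>V. f (act z w) = exp (inner \<alpha> (zr z)) * f w" using fm by blast
  show ?thesis
  proof
    assume "harmonic b c lam f"
    then have "\<forall>x. Hop b c f x - lam * f x = 0" by (simp add: harmonic_def)
    then show "\<forall>v\<in>V. (\<Sum>w\<in>V. Qmat b c act V \<alpha> v w * f w) = (MM - lam) * f v"
      using Hop_V[OF fmV] by (auto simp: algebra_simps)
  next
    assume H: "\<forall>v\<in>V. (\<Sum>w\<in>V. Qmat b c act V \<alpha> v w * f w) = (MM - lam) * f v"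
    have "Hop b c f x - lam * f x = 0" for x
    proof -
      obtain z v where v: "v \<in> V" "x = act z v" by (rule fd_ex)
      have "Hop b c f x = exp (inner \<alpha> (zr z)) * Hop b c f v"
        using Hop_shift[OF fm] v by simp
      also have "Hop b c f v = lam * f v"
      proof -
        have "(\<Sum>w\<in>V. Qmat b c act V \<alpha> v w * f w) = (MM - lam) * f v" using H v(1) by blast
        then show ?thesis using Hop_V[OF fmV v(1)] by (simp add: algebra_simps)
      qed
      finally show ?thesis using fm v by simp
    qed
    then show "harmonic b c lam f" by (simp add: harmonic_def DomH_all)
  qed
qed

definition Hs where "Hs lam = {f. (\<forall>x. f x \<ge> 0) \<and> f x0 = 1 \<and> (\<forall>x. Hop b c f x = lam * f x)}"

lemma Kset_eq: "Kset b c x0 lam = Hs lam"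
proof -
  have eq: "{f. (\<forall>x. f x \<ge> 0) \<and> f \<noteq> (\<lambda>_. 0) \<and> harmonic b c lam f \<and> f x0 = 1} = Hs lam"
    by (auto simp: Hs_def harmonic_def DomH_all)
  have c1: "closed {f :: 'x \<Rightarrow> real. f x \<ge> 0}" for x
    by (rule closed_Collect_le) (auto intro: continuous_on_const)
  have c2: "closed {f :: 'x \<Rightarrow> real. f x0 = 1}"
    by (rule closed_Collect_eq) (auto intro: continuous_on_const)
  have c3: "closed {f. Hop b c f x = lam * f x}" for x
  proof -
    have "{f. Hop b c f x = lam * f x} = {f. (\<Sum>y\<in>N x. b x y * (f x - f y)) + c x * f x = lam * f x}"
      by (simp add: Hop_fin)
    also have "closed \<dots>"
      by (intro closed_Collect_eq continuous_intros continuous_on_product_coordinates)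
    finally show ?thesis .
  qed
  have "Hs lam = (\<Inter>x. {f. f x \<ge> 0}) \<inter> {f. f x0 = 1} \<inter> (\<Inter>x. {f. Hop b c f x = lam * f x})"
    unfolding Hs_def by blast
  moreover have "closed ((\<Inter>x. {f. f x \<ge> 0}) \<inter> {f. f x0 = 1} \<inter> (\<Inter>x. {f. Hop b c f x = lam * f x}))"
    by (intro closed_Int closed_INT ballI c1 c2 c3)
  ultimately have "closed (Hs lam)" by simp
  then show ?thesis unfolding Kset_def eq by (rule closure_closed)
qed

lemma Hs_pos: assumes "f \<in> Hs lam" shows "f x > 0"
proof (rule ccontr)
  assume "\<not> f x > 0"
  have nn: "\<forall>x. f x \<ge> 0" and h: "\<forall>x. Hop b c f x = lam * f x" and f1: "f x0 = 1" using assms by (auto simp: Hs_def)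
  have fx: "f x = 0" using nn[rule_format, of x] \<open>\<not> f x > 0\<close> by linarith
  have step: "f w = 0" if "b u w > 0" "f u = 0" for u w
  proof -
    have "(\<Sum>y\<in>N u. b u y * f y) = 0" using h[rule_format, of u] that(2) by (simp add: Hop_alt)
    moreover have "\<forall>y\<in>N u. 0 \<le> b u y * f y" using bnn nn by simp
    ultimately have "\<forall>y\<in>N u. b u y * f y = 0" using finN by (simp add: sum_nonneg_eq_0_iff)
    moreover have "w \<in> N u" using that by (simp add: N_def)
    ultimately have "b u w * f w = 0" by blast
    then show ?thesis using that(1) by simp
  qed
  have "(\<lambda>u w. b u w > 0)\<^sup>*\<^sup>* x x0" using conn by (simp add: connected_graph_def)
  then have "f x0 = 0" by (induction rule: rtranclp_induct) (use fx step in auto)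
  with f1 show False by simp
qed

lemma Q_nonneg: assumes "v \<in> V" "w \<in> V" shows "Qmat b c act V \<alpha> v w \<ge> 0"
proof -
  have "MM \<ge> deg b c v" using assms finV by (intro Max_ge) auto
  moreover have "(\<Sum>z\<in>Zs v w. b v (act z w) * exp (inner \<alpha> (zr z))) \<ge> 0" by (auto intro!: sum_nonneg simp: bnn)
  ultimately show ?thesis by (simp add: Qmat_split)
qed

lemma Q_ge: assumes "v \<in> V" "w \<in> V"
  shows "Qmat b c act V \<alpha> v w \<ge> b v (act z w) * exp (inner \<alpha> (zr z))"
proof -
  have "MM \<ge> deg b c v" using assms finV by (intro Max_ge) auto
  moreover have "(\<Sum>z\<in>Zs v w. b v (act z w) * exp (inner \<alpha> (zr z))) \<ge> b v (act z w) * exp (inner \<alpha> (zr z))"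
  proof (cases "z \<in> Zs v w")
    case True then show ?thesis
      by (intro member_le_sum[where f="\<lambda>z. b v (act z w) * exp (inner \<alpha> (zr z))"]) (auto simp: finZs bnn)
  next
    case False then have "b v (act z w) = 0" by (simp add: Zs_def N_def)
    then show ?thesis by (auto intro!: sum_nonneg simp: bnn)
  qed
  moreover have "0 \<le> (if w = v then MM - deg b c v else 0)" using calculation(1) by simp
  ultimately show ?thesis unfolding Qmat_split by linarith
qed

definition proj where "proj x = snd (coord act V x)"

lemma proj_act: "v \<in> V \<Longrightarrow> proj (act z v) = v" by (simp add: proj_def coord_eq)

lemma Q_irr: "\<forall>i\<in>V. \<forall>j\<in>V. (\<lambda>i j. i \<in> V \<and> j \<in> V \<and> Qmat b c act V \<alpha> i j > 0)\<^sup>*\<^sup>* i j"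
proof (intro ballI)
  let ?R = "\<lambda>i j. i \<in> V \<and> j \<in> V \<and> Qmat b c act V \<alpha> i j > 0"
  have edge: "?R\<^sup>*\<^sup>* (proj x) (proj y)" if "b x y > 0" for x y
  proof (cases "x = y")
    case True then show ?thesis by simp
  next
    case False
    obtain z1 v1 where v1: "v1 \<in> V" "x = act z1 v1" by (rule fd_ex)
    obtain z2 v2 where v2: "v2 \<in> V" "y = act z2 v2" by (rule fd_ex)
    have "act (- z1) y = act (- z1 + z2) v2" using v2 by (simp only: act_add)
    then have "b v1 (act (- z1 + z2) v2) = b x y"
      using b_inv[OF False, of "- z1"] v1 by simp
    then have "b v1 (act (- z1 + z2) v2) * exp (inner \<alpha> (zr (- z1 + z2))) > 0" using that by simp
    then have "Qmat b c act V \<alpha> v1 v2 > 0" using Q_ge[OF v1(1) v2(1)] by (meson less_le_trans)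
    then have "?R v1 v2" using v1 v2 by simp
    then have "?R\<^sup>*\<^sup>* v1 v2" by (rule r_into_rtranclp)
    moreover have "proj x = v1" "proj y = v2" using v1 v2 by (simp_all add: proj_act)
    ultimately show ?thesis by simp
  qed
  fix i j assume ij: "i \<in> V" "j \<in> V"
  have "(\<lambda>u w. b u w > 0)\<^sup>*\<^sup>* i j" using conn by (simp add: connected_graph_def)
  then have "?R\<^sup>*\<^sup>* (proj i) (proj j)"
  proof (induction rule: rtranclp_induct)
    case base then show ?case by simp
  next
    case (step y z) then show ?case using edge[of y z] by (meson rtranclp_trans)
  qed
  moreover have "proj i = i" "proj j = j" using proj_act[of i 0] proj_act[of j 0] ij by simp_all
  ultimately show "?R\<^sup>*\<^sup>* i j" by simp
qed

end

context setting begin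

lemma rho_eq:
  assumes f1: "f x0 = 1" and fm: "\<forall>z x. f (act z x) = exp (inner \<alpha> (zr z)) * f x"
  shows "multiplicative act f" "rho act f = \<alpha>"
proof -
  have ic: "is_character act f (\<lambda>z. exp (inner \<alpha> (zr z)))"
    by (simp add: is_character_def exp_zr_add fm)
  then show "multiplicative act f" by (auto simp: multiplicative_def)
  have ch: "character act f = (\<lambda>z. exp (inner \<alpha> (zr z)))" unfolding character_def
  proof (rule the_equality)
    show "is_character act f (\<lambda>z. exp (inner \<alpha> (zr z)))" by (rule ic)
    fix \<gamma> assume "is_character act f \<gamma>"
    then have "\<gamma> z = f (act z x0)" for z using f1 by (simp add: is_character_def)
    then show "\<gamma> = (\<lambda>z. exp (inner \<alpha> (zr z)))" using fm f1 by (intro ext) simp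
  qed
  show "rho act f = \<alpha>" unfolding rho_def ch
  proof (rule the_equality)
    show "\<forall>z. ln (exp (inner \<alpha> (zr z))) = inner \<alpha> (zr z)" by simp
    fix \<beta> :: "real^'d" assume h: "\<forall>z. ln (exp (inner \<alpha> (zr z))) = inner \<beta> (zr z)"
    show "\<beta> = \<alpha>"
    proof (rule Finite_Cartesian_Product.vec_eq_iff[THEN iffD2], rule allI)
      fix i
      have "inner \<alpha> (zr (axis i 1)) = inner \<beta> (zr (axis i 1))" using h by simp
      then show "\<beta> $ i = \<alpha> $ i" by (simp add: zr_axis inner_axis)
    qed
  qed
qed

lemma MR_char:
  assumes "f \<in> MR b c act x0"
  shows "\<exists>lam. f \<in> Hs lam \<and> (\<forall>z x. f (act z x) = exp (inner (rho act f) (zr z)) * f x)"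
proof -
  obtain lam where fK: "f \<in> Hs lam" and m: "multiplicative act f"
    using assms by (auto simp: MR_def Mset_def Kset_eq)
  obtain \<gamma> where g: "is_character act f \<gamma>" using m by (auto simp: multiplicative_def)
  obtain \<alpha> where a: "\<forall>z. \<gamma> z = exp (inner \<alpha> (zr z))"
    using hom_exp[of \<gamma>] g by (auto simp: is_character_def)
  have fm: "\<forall>z x. f (act z x) = exp (inner \<alpha> (zr z)) * f x" using g a by (simp add: is_character_def)
  have "f x0 = 1" using fK by (simp add: Hs_def)
  then have "rho act f = \<alpha>" using rho_eq(2)[OF _ fm] by simp
  then show ?thesis using fK fm by auto
qed

lemma Qnn: "\<forall>i\<in>V. \<forall>j\<in>V. 0 \<le> Qmat b c act V \<alpha> i j" using Q_nonneg by blast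

lemma main:
  shows "bij_betw (rho act) (MR b c act x0) UNIV
    \<and> (\<forall>\<alpha>. (\<exists>\<phi>. PF_eigenvector V (Qmat b c act V \<alpha>) \<phi> \<and> mult_fun act V \<alpha> \<phi> x0 = 1)
         \<and> (\<forall>\<phi>. PF_eigenvector V (Qmat b c act V \<alpha>) \<phi> \<and> mult_fun act V \<alpha> \<phi> x0 = 1 \<longrightarrow>
               inv_into (MR b c act x0) (rho act) \<alpha> = mult_fun act V \<alpha> \<phi>
             \<and> mult_fun act V \<alpha> \<phi> \<in> Mset b c act x0
                  (Max (deg b c ` V) - PF_eigenvalue V (Qmat b c act V \<alpha>))))"
proof -
  have member: "mult_fun act V \<alpha> \<phi> \<in> Mset b c act x0 (MM - PF_eigenvalue V (Qmat b c act V \<alpha>))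
      \<and> rho act (mult_fun act V \<alpha> \<phi>) = \<alpha>"
    if pf: "PF_eigenvector V (Qmat b c act V \<alpha>) \<phi>" and n1: "mult_fun act V \<alpha> \<phi> x0 = 1" for \<alpha> \<phi>
  proof -
    define f where "f = mult_fun act V \<alpha> \<phi>"
    define PF where "PF = PF_eigenvalue V (Qmat b c act V \<alpha>)"
    have fm: "\<forall>z x. f (act z x) = exp (inner \<alpha> (zr z)) * f x" by (simp add: f_def mult_fun_shift)
    have pos: "\<forall>v\<in>V. \<phi> v > 0" and eig: "\<forall>v\<in>V. (\<Sum>w\<in>V. Qmat b c act V \<alpha> v w * \<phi> w) = PF * \<phi> v"
      using pf by (auto simp: PF_eigenvector_def PF_def)
    have "\<forall>v\<in>V. (\<Sum>w\<in>V. Qmat b c act V \<alpha> v w * f w) = (MM - (MM - PF)) * f v"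
    proof
      fix v assume v: "v \<in> V"
      have "(\<Sum>w\<in>V. Qmat b c act V \<alpha> v w * f w) = (\<Sum>w\<in>V. Qmat b c act V \<alpha> v w * \<phi> w)"
        by (rule sum.cong) (simp_all add: f_def mult_fun_V)
      then show "(\<Sum>w\<in>V. Qmat b c act V \<alpha> v w * f w) = (MM - (MM - PF)) * f v"
        using eig v by (simp add: f_def mult_fun_V)
    qed
    then have harm: "harmonic b c (MM - PF) f" using harmonic_iff[OF fm] by blast
    have nn: "\<forall>x. f x \<ge> 0"
    proof
      fix x obtain z v where v: "v \<in> V" "x = act z v" by (rule fd_ex)
      then show "f x \<ge> 0" using pos by (simp add: f_def mult_fun_act less_imp_le)
    qed
    have "f \<in> Hs (MM - PF)" using nn n1 harm by (simp add: Hs_def f_def harmonic_def)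
    then have "f \<in> Kset b c x0 (MM - PF)" by (simp add: Kset_eq)
    moreover have "multiplicative act f" "rho act f = \<alpha>"
      using rho_eq[OF _ fm] n1 by (simp_all add: f_def)
    ultimately show ?thesis by (simp add: Mset_def f_def PF_def)
  qed
  have exist: "\<exists>\<phi>. PF_eigenvector V (Qmat b c act V \<alpha>) \<phi> \<and> mult_fun act V \<alpha> \<phi> x0 = 1" for \<alpha>
  proof -
    obtain \<phi>0 r where pos: "\<forall>v\<in>V. \<phi>0 v > 0" and eig: "\<forall>v\<in>V. (\<Sum>w\<in>V. Qmat b c act V \<alpha> v w * \<phi>0 w) = r * \<phi>0 v"
      using PF_exist[OF finV Vne Qnn Q_irr] by blast
    have PF: "PF_eigenvalue V (Qmat b c act V \<alpha>) = r" by (rule PF_eigenvalue_eq[OF finV Vne Qnn pos eig])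
    define s where "s = mult_fun act V \<alpha> \<phi>0 x0"
    have spos: "s > 0"
    proof -
      obtain z v where v: "v \<in> V" "x0 = act z v" by (rule fd_ex)
      then show ?thesis using pos by (simp add: s_def mult_fun_act)
    qed
    define \<phi> where "\<phi> v = \<phi>0 v / s" for v
    have "PF_eigenvector V (Qmat b c act V \<alpha>) \<phi>"
      unfolding PF_eigenvector_def PF
    proof (intro conjI ballI)
      fix v assume v: "v \<in> V"
      show "\<phi> v > 0" using pos v spos by (simp add: \<phi>_def)
      have "(\<Sum>w\<in>V. Qmat b c act V \<alpha> v w * \<phi> w) = (\<Sum>w\<in>V. Qmat b c act V \<alpha> v w * \<phi>0 w) / s"
        by (simp add: \<phi>_def sum_divide_distrib)
      then show "(\<Sum>w\<in>V. Qmat b c act V \<alpha> v w * \<phi> w) = r * \<phi> v" using eig v by (simp add: \<phi>_def)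
    qed
    moreover have "mult_fun act V \<alpha> \<phi> x0 = 1" using spos unfolding \<phi>_def mult_fun_div by (simp add: s_def)
    ultimately show ?thesis by blast
  qed
  have inj: "inj_on (rho act) (MR b c act x0)"
  proof (rule inj_onI)
    fix f g assume f: "f \<in> MR b c act x0" and g: "g \<in> MR b c act x0" and fg: "rho act f = rho act g"
    obtain lf where fH: "f \<in> Hs lf" and fm: "\<forall>z x. f (act z x) = exp (inner (rho act f) (zr z)) * f x"
      using MR_char[OF f] by blast
    obtain lg where gH: "g \<in> Hs lg" and gm: "\<forall>z x. g (act z x) = exp (inner (rho act f) (zr z)) * g x"
      using MR_char[OF g] fg by auto
    let ?Q = "Qmat b c act V (rho act f)"
    have posf: "\<forall>v\<in>V. f v > 0" using Hs_pos[OF fH] by blast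
    have posg: "\<forall>v\<in>V. g v > 0" using Hs_pos[OF gH] by blast
    have hf: "harmonic b c lf f" using fH by (simp add: Hs_def harmonic_def DomH_all)
    have hg: "harmonic b c lg g" using gH by (simp add: Hs_def harmonic_def DomH_all)
    have eigf: "\<forall>v\<in>V. (\<Sum>w\<in>V. ?Q v w * f w) = (MM - lf) * f v" using harmonic_iff[OF fm] hf by blast
    have eigg: "\<forall>v\<in>V. (\<Sum>w\<in>V. ?Q v w * g w) = (MM - lg) * g v" using harmonic_iff[OF gm] hg by blast
    have "PF_eigenvalue V ?Q = MM - lf" by (rule PF_eigenvalue_eq[OF finV Vne Qnn posf eigf])
    moreover have "PF_eigenvalue V ?Q = MM - lg" by (rule PF_eigenvalue_eq[OF finV Vne Qnn posg eigg])
    ultimately have "MM - lg = MM - lf" by simp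
    then have eigg': "\<forall>v\<in>V. (\<Sum>w\<in>V. ?Q v w * g w) = (MM - lf) * g v" using eigg by simp
    obtain t where t: "\<forall>v\<in>V. f v = t * g v"
      using PF_unique[OF finV Vne Qnn Q_irr posf eigf posg eigg'] by blast
    have all: "f x = t * g x" for x
    proof -
      obtain z v where v: "v \<in> V" "x = act z v" by (rule fd_ex)
      then show ?thesis using fm gm t by simp
    qed
    have "f x0 = 1" "g x0 = 1" using fH gH by (simp_all add: Hs_def)
    then have "t = 1" using all[of x0] by simp
    then show "f = g" using all by (intro ext) simp
  qed
  have inMR: "f \<in> Mset b c act x0 lam \<Longrightarrow> f \<in> MR b c act x0" for f lam by (auto simp: MR_def)
  have surj: "rho act ` MR b c act x0 = UNIV"
  proof -
    have "\<alpha> \<in> rho act ` MR b c act x0" for \<alpha>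
    proof -
      obtain \<phi> where "PF_eigenvector V (Qmat b c act V \<alpha>) \<phi>" "mult_fun act V \<alpha> \<phi> x0 = 1" using exist by blast
      from member[OF this] show ?thesis using inMR by (metis image_eqI)
    qed
    then show ?thesis by blast
  qed
  show ?thesis
  proof (intro conjI allI impI)
    show "bij_betw (rho act) (MR b c act x0) UNIV" using inj surj by (simp add: bij_betw_def)
  next
    fix \<alpha> show "\<exists>\<phi>. PF_eigenvector V (Qmat b c act V \<alpha>) \<phi> \<and> mult_fun act V \<alpha> \<phi> x0 = 1" by (rule exist)
  next
    fix \<alpha> \<phi> assume h: "PF_eigenvector V (Qmat b c act V \<alpha>) \<phi> \<and> mult_fun act V \<alpha> \<phi> x0 = 1"
    then have m: "mult_fun act V \<alpha> \<phi> \<in> Mset b c act x0 (MM - PF_eigenvalue V (Qmat b c act V \<alpha>))"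
      and r: "rho act (mult_fun act V \<alpha> \<phi>) = \<alpha>" using member by blast+
    show "mult_fun act V \<alpha> \<phi> \<in> Mset b c act x0 (MM - PF_eigenvalue V (Qmat b c act V \<alpha>))" by (rule m)
    show "inv_into (MR b c act x0) (rho act) \<alpha> = mult_fun act V \<alpha> \<phi>"
    proof (rule inv_into_f_eq)
      show "inj_on (rho act) (MR b c act x0)" by (rule inj)
      show "mult_fun act V \<alpha> \<phi> \<in> MR b c act x0" by (rule inMR[OF m])
      show "rho act (mult_fun act V \<alpha> \<phi>) = \<alpha>" by (rule r)
    qed
  qed
qed

end

theorem lemma12:
  fixes b :: "'x::countable \<Rightarrow> 'x \<Rightarrow> real" and c :: "'x \<Rightarrow> real"
    and act :: "int ^ 'd::finite \<Rightarrow> 'x \<Rightarrow> 'x" and V :: "'x set" and x0 :: 'x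
  assumes "is_graph b" and "locally_finite b" and "connected_graph b"
    and "is_action act" and "free_action act"
    and "finite V" and "fundamental_domain act V"
    and "H_invariant b c act"
  shows "bij_betw (rho act) (MR b c act x0) UNIV
    \<and> (\<forall>\<alpha>. (\<exists>\<phi>. PF_eigenvector V (Qmat b c act V \<alpha>) \<phi> \<and> mult_fun act V \<alpha> \<phi> x0 = 1)
         \<and> (\<forall>\<phi>. PF_eigenvector V (Qmat b c act V \<alpha>) \<phi> \<and> mult_fun act V \<alpha> \<phi> x0 = 1 \<longrightarrow>
               inv_into (MR b c act x0) (rho act) \<alpha> = mult_fun act V \<alpha> \<phi>
             \<and> mult_fun act V \<alpha> \<phi> \<in> Mset b c act x0
                  (Max (deg b c ` V) - PF_eigenvalue V (Qmat b c act V \<alpha>))))"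
proof -
  have "setting b c act V" unfolding setting_def using assms by blast
  then show ?thesis by (rule setting.main)
qed

end
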